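(* Let $p>1$, $p'=\frac{p}{p-1}$, $\Omega=\{x\in\mathbb{R}^2\;;\;|x|>1\}$, and let $\eta,\eta^*,\psi_R,\psi_R^*,P(R)$ be as in the context. Then there exist positive constants $C_1,C_2,C_3,C_4$ (independent of $R$ and of $(x,t)$) such that for every $R>0$: (i) $\psi_R(x,t)=1$ if $(x,t)\in P(R/2)$, and $\psi_R(x,t)=0$ if $(x,t)\notin P(R)$; (ii) $|\partial_t\psi_R(x,t)|\le C_1R^{-1}[\psi_R^*(x,t)]^{1/p}$ for all $(x,t)\in P(R)$; (iii) $|\partial_t^2\psi_R(x,t)|\le C_2R^{-2}[\psi_R^*(x,t)]^{1/p}$ for all $(x,t)\in P(R)$; (iv) $|\nabla\psi_R(x,t)|\le C_3R^{-1}|x|(\log|x|)[\psi_R^*(x,t)]^{1/p}$ for all $(x,t)\in P(R)$; (v) $|\Delta\psi_R(x,t)|\le C_4R^{-1}[\psi_R^*(x,t)]^{1/p}$ for all $(x,t)\in P(R)$.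
   Context: Fix $\eta\in C^2([0,\infty))$ with $\eta=1$ on $[0,1/2]$, $\eta$ decreasing on $(1/2,1)$, $\eta=0$ on $[1,\infty)$; let $\eta^*(s)=0$ for $s\in[0,1/2)$ and $\eta^*(s)=\eta(s)$ for $s\ge1/2$. For $R>0$ set $s_R(x,t)=\frac{(|x|-1)^2+t}{R}$, $\psi_R(x,t)=[\eta(s_R(x,t))]^{2p'}$, $\psi_R^*(x,t)=[\eta^*(s_R(x,t))]^{2p'}$ for $(x,t)\in\Omega\times[0,\infty)$, and $P(R)=\{(x,t)\in\Omega\times[0,\infty)\;;\;(|x|-1)^2+t\le R\}$. *)

theory Defs
  imports "HOL-Analysis.Analysis"
begin

definition pprime :: "real \<Rightarrow> real" where
  "pprime p = p / (p - 1)"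

definition C2_on_nonneg :: "(real \<Rightarrow> real) \<Rightarrow> bool" where
  "C2_on_nonneg f \<longleftrightarrow> (\<exists>f1 f2.
     (\<forall>s\<ge>0. (f has_real_derivative f1 s) (at s within {0..}) \<and>
              (f1 has_real_derivative f2 s) (at s within {0..})) \<and>
     continuous_on {0..} f2)"

definition cutoff :: "(real \<Rightarrow> real) \<Rightarrow> bool" where
  "cutoff eta \<longleftrightarrow> C2_on_nonneg eta \<and>
     (\<forall>s. 0 \<le> s \<and> s \<le> 1/2 \<longrightarrow> eta s = 1) \<and>
     (\<forall>a b. 1/2 < a \<and> a < b \<and> b < 1 \<longrightarrow> eta b \<le> eta a) \<and>
     (\<forall>s\<ge>1. eta s = 0)"

definition eta_star :: "(real \<Rightarrow> real) \<Rightarrow> real \<Rightarrow> real" where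
  "eta_star eta s = (if s < 1/2 then 0 else eta s)"

definition sR :: "real \<Rightarrow> real^2 \<Rightarrow> real \<Rightarrow> real" where
  "sR R x t = ((norm x - 1)\<^sup>2 + t) / R"

definition psiR :: "real \<Rightarrow> (real \<Rightarrow> real) \<Rightarrow> real \<Rightarrow> real^2 \<Rightarrow> real \<Rightarrow> real" where
  "psiR p eta R x t = (eta (sR R x t)) powr (2 * pprime p)"

definition psiR_star :: "real \<Rightarrow> (real \<Rightarrow> real) \<Rightarrow> real \<Rightarrow> real^2 \<Rightarrow> real \<Rightarrow> real" where
  "psiR_star p eta R x t = (eta_star eta (sR R x t)) powr (2 * pprime p)"

definition Omega :: "(real^2) set" where
  "Omega = {x. norm x > 1}"

definition PR :: "real \<Rightarrow> ((real^2) \<times> real) set" where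
  "PR R = {(x, t). x \<in> Omega \<and> t \<ge> 0 \<and> (norm x - 1)\<^sup>2 + t \<le> R}"

definition partial_x :: "2 \<Rightarrow> (real^2 \<Rightarrow> real) \<Rightarrow> real^2 \<Rightarrow> real" where
  "partial_x i f x = deriv (\<lambda>h. f (x + h *\<^sub>R axis i 1)) 0"

definition grad :: "(real^2 \<Rightarrow> real) \<Rightarrow> real^2 \<Rightarrow> real^2" where
  "grad f x = (\<chi> i. partial_x i f x)"

definition laplacian :: "(real^2 \<Rightarrow> real) \<Rightarrow> real^2 \<Rightarrow> real" where
  "laplacian f x = (\<Sum>i\<in>UNIV. partial_x i (partial_x i f) x)"

end

theory Submission imports Defs begin

definition Ph1 :: "(real \<Rightarrow> real) \<Rightarrow> (real \<Rightarrow> real) \<Rightarrow> real \<Rightarrow> real \<Rightarrow> real" where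
  "Ph1 eta f1 a s = a * eta s powr (a-1) * f1 s"

definition Ph2 :: "(real \<Rightarrow> real) \<Rightarrow> (real \<Rightarrow> real) \<Rightarrow> (real \<Rightarrow> real) \<Rightarrow> real \<Rightarrow> real \<Rightarrow> real" where
  "Ph2 eta f1 f2 a s = a * ((a-1) * eta s powr (a-2) * f1 s * f1 s + eta s powr (a-1) * f2 s)"



lemma normline: fixes y :: "real^2" assumes "y \<noteq> 0"
  shows "((\<lambda>h. norm (y + h *\<^sub>R axis i 1)) has_real_derivative y$i / norm y) (at 0)"
proof -
  have l: "((\<lambda>h. y + h *\<^sub>R axis i 1) has_derivative (\<lambda>h. h *\<^sub>R axis i 1)) (at 0)"
    by (auto intro!: derivative_eq_intros)
  have n: "((\<lambda>x. norm x) has_derivative (\<lambda>h. h \<bullet> sgn y)) (at (y + 0 *\<^sub>R axis i 1))"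
    using has_derivative_norm[OF assms] by simp
  have c: "((\<lambda>h. norm (y + h *\<^sub>R axis i 1)) has_derivative (\<lambda>h. (h *\<^sub>R axis i 1) \<bullet> sgn y)) (at 0)"
    using has_derivative_compose[OF l n] by simp
  have e: "(\<lambda>h::real. (h *\<^sub>R axis i 1) \<bullet> sgn y) = (*) (y$i / norm y)"
    by (auto simp: inner_axis' sgn_div_norm divide_inverse)
  show ?thesis using c unfolding has_field_derivative_def e .
qed

definition sfun :: "real \<Rightarrow> real \<Rightarrow> real \<Rightarrow> real" where
  "sfun R t \<rho> = ((\<rho> - 1)\<^sup>2 + t) / R"

definition G1f where
  "G1f eta f1 a R t \<rho> = Ph1 eta f1 a (sfun R t \<rho>) * (2 * (\<rho> - 1) / R)"

definition G2f where
  "G2f eta f1 f2 a R t \<rho> = Ph2 eta f1 f2 a (sfun R t \<rho>) * (2 * (\<rho> - 1) / R)\<^sup>2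
     + Ph1 eta f1 a (sfun R t \<rho>) * (2 / R)"

context
  fixes eta f1 f2 :: "real \<Rightarrow> real" and M1 M2 :: real
  assumes d1: "\<And>s. s > 0 \<Longrightarrow> (eta has_real_derivative f1 s) (at s)"
  and d2: "\<And>s. s > 0 \<Longrightarrow> (f1 has_real_derivative f2 s) (at s)"
  and nonneg: "\<And>s. s > 0 \<Longrightarrow> 0 \<le> eta s"
  and le1: "\<And>s. s > 0 \<Longrightarrow> eta s \<le> 1"
  and flat: "\<And>s. 0 < s \<Longrightarrow> s \<le> 1/2 \<Longrightarrow> eta s = 1"
  and M1: "\<And>s. 0 < s \<Longrightarrow> s \<le> 1 \<Longrightarrow> \<bar>f1 s\<bar> \<le> M1"
  and M2: "\<And>s. 0 < s \<Longrightarrow> s \<le> 1 \<Longrightarrow> \<bar>f2 s\<bar> \<le> M2"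
begin


lemma zero_deriv: assumes "s > 0" "eta s = 0" shows "f1 s = 0"
proof (rule DERIV_local_min[OF d1[OF assms(1)] assms(1)])
  show "\<forall>y. \<bar>s - y\<bar> < s \<longrightarrow> eta s \<le> eta y"
    using nonneg assms(2) by (smt (verit))
qed

lemma powr_deriv:
  assumes c: "c > 1" and s: "s > 0"
  shows "((\<lambda>u. eta u powr c) has_real_derivative c * eta s powr (c-1) * f1 s) (at s)"
proof (cases "eta s > 0")
  case True
  show ?thesis using DERIV_fun_powr[OF d1[OF s] True, of c] by simp
next
  case False
  then have e0: "eta s = 0" using nonneg[OF s] by simp
  have f0: "f1 s = 0" using zero_deriv[OF s e0] .
  have lim1: "((\<lambda>h. (eta (s + h) - eta s) / h) \<longlongrightarrow> 0) (at 0)"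
    using d1[OF s] f0 by (simp add: DERIV_def)
  have ct: "isCont eta s" using DERIV_isCont[OF d1[OF s]] .
  have lim2: "((\<lambda>h. eta (s + h)) \<longlongrightarrow> 0) (at 0)"
    using ct e0 by (metis LIM_offset_zero isCont_def)
  have ev: "\<forall>\<^sub>F h in at 0. 0 \<le> eta (s + h)"
  proof -
    have "\<forall>\<^sub>F h in at (0::real). h \<in> {-s<..<s}"
      by (rule eventually_at_in_open') (use s in auto)
    then show ?thesis by eventually_elim (use nonneg in auto)
  qed
  have lim3: "((\<lambda>h. eta (s + h) powr (c - 1)) \<longlongrightarrow> 0) (at 0)"
    by (rule tendsto_zero_powrI[OF lim2 tendsto_const ev]) (use c in simp)
  have lim4: "((\<lambda>h. (eta (s + h) - eta s) / h * eta (s + h) powr (c - 1)) \<longlongrightarrow> 0) (at 0)"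
    using tendsto_mult[OF lim1 lim3] by simp
  have eq: "\<forall>\<^sub>F h in at 0. (eta (s + h) - eta s) / h * eta (s + h) powr (c - 1)
      = (eta (s + h) powr c - eta s powr c) / h"
    using ev
  proof eventually_elim
    case (elim h)
    show ?case
    proof (cases "eta (s+h) = 0")
      case True then show ?thesis using e0 by simp
    next
      case False
      have "eta (s+h) powr c = eta (s+h) powr (1 + (c-1))" by simp
      also have "\<dots> = eta (s+h) powr 1 * eta (s+h) powr (c-1)" by (rule powr_add)
      finally have "eta (s+h) powr c = eta (s+h) powr 1 * eta (s+h) powr (c-1)" .
      then show ?thesis using e0 elim by simp
    qed
  qed
  have "((\<lambda>h. (eta (s + h) powr c - eta s powr c) / h) \<longlongrightarrow> 0) (at 0)"
    using tendsto_cong[OF eq] lim4 by simp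
  then show ?thesis using e0 f0 by (simp add: DERIV_def)
qed


lemma phi_deriv: assumes "a > 2" "s > 0"
  shows "((\<lambda>u. eta u powr a) has_real_derivative Ph1 eta f1 a s) (at s)"
  using powr_deriv[of a s] assms unfolding Ph1_def by simp

lemma phi1_deriv: assumes a: "a > 2" and s: "s > 0"
  shows "((\<lambda>u. Ph1 eta f1 a u) has_real_derivative Ph2 eta f1 f2 a s) (at s)"
proof -
  note D = DERIV_cmult[OF DERIV_mult[OF powr_deriv[of "a-1" s] d2[OF s]], of a]
  have e: "a - 1 - 1 = a - 2" by simp
  show ?thesis unfolding Ph1_def Ph2_def mult.assoc
    by (rule DERIV_cong[OF D]) (use a s in \<open>simp_all add: e algebra_simps\<close>)
qed

lemma flat_derivs: assumes "0 < s" "s < 1/2" shows "f1 s = 0" "f2 s = 0"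
proof -
  have A: "f1 u = 0" if "0 < u" "u < 1/2" for u
  proof -
    have "((\<lambda>_. 1) has_real_derivative 0) (at u)" by simp
    then have "(eta has_real_derivative 0) (at u)"
      by (rule has_field_derivative_transform_within_open[of _ _ _ "{0<..<1/2}"])
         (use that flat in auto)
    then show ?thesis using DERIV_unique d1 that by blast
  qed
  then show "f1 s = 0" using assms by simp
  have "((\<lambda>_. 0) has_real_derivative 0) (at s)" by simp
  then have "(f1 has_real_derivative 0) (at s)"
    by (rule has_field_derivative_transform_within_open[of _ _ _ "{0<..<1/2}"])
       (use assms A in auto)
  then show "f2 s = 0" using DERIV_unique d2 assms by blast
qed

lemma powr_le_aux: fixes e b :: real assumes "0 \<le> e" "e \<le> 1" "b > 0"
  shows "e powr (b+1) \<le> e powr b"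
proof -
  have "e powr (b+1) = e powr b * e powr 1" by (rule powr_add)
  also have "\<dots> = e powr b * e" using assms by simp
  also have "\<dots> \<le> e powr b * 1" using assms by (intro mult_left_mono) auto
  finally show ?thesis by simp
qed

lemma ph1_bound: assumes a: "a > 2" and s: "0 < s" "s \<le> 1"
  shows "\<bar>Ph1 eta f1 a s\<bar> \<le> (a * \<bar>M1\<bar> + 1) * eta_star eta s powr (a-2)"
proof (cases "s < 1/2")
  case True
  then show ?thesis using flat_derivs s by (simp add: Ph1_def eta_star_def)
next
  case False
  let ?e = "eta s"
  have e: "0 \<le> ?e" "?e \<le> 1" using nonneg le1 s by auto
  have p: "?e powr (a-1) \<le> ?e powr (a-2)" using powr_le_aux[OF e, of "a-2"] a by simp
  have "\<bar>Ph1 eta f1 a s\<bar> = a * ?e powr (a-1) * \<bar>f1 s\<bar>"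
    using a by (simp add: Ph1_def abs_mult)
  also have "\<dots> \<le> a * ?e powr (a-2) * \<bar>M1\<bar>"
    using a p M1[OF s] by (intro mult_mono) auto
  also have "\<dots> \<le> (a * \<bar>M1\<bar> + 1) * ?e powr (a-2)" by (simp add: algebra_simps)
  finally show ?thesis using False by (simp add: eta_star_def)
qed

lemma ph2_bound: assumes a: "a > 2" and s: "0 < s" "s \<le> 1"
  shows "\<bar>Ph2 eta f1 f2 a s\<bar> \<le> (a * (a-1) * M1\<^sup>2 + a * \<bar>M2\<bar> + 1) * eta_star eta s powr (a-2)"
proof (cases "s < 1/2")
  case True
  then show ?thesis using flat_derivs s by (simp add: Ph2_def eta_star_def)
next
  case False
  let ?e = "eta s"
  have e: "0 \<le> ?e" "?e \<le> 1" using nonneg le1 s by auto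
  have p: "?e powr (a-1) \<le> ?e powr (a-2)" using powr_le_aux[OF e, of "a-2"] a by simp
  have m1: "\<bar>f1 s * f1 s\<bar> \<le> M1\<^sup>2" using M1[OF s]
    by (metis abs_ge_zero abs_mult mult_mono' power2_eq_square power2_abs)
  have "\<bar>Ph2 eta f1 f2 a s\<bar> \<le> a * ((a-1) * ?e powr (a-2) * \<bar>f1 s * f1 s\<bar> + ?e powr (a-1) * \<bar>f2 s\<bar>)"
  proof -
    have "\<bar>(a-1) * ?e powr (a-2) * f1 s * f1 s\<bar> = (a-1) * ?e powr (a-2) * \<bar>f1 s * f1 s\<bar>"
      using a by (simp add: abs_mult)
    moreover have "\<bar>?e powr (a-1) * f2 s\<bar> = ?e powr (a-1) * \<bar>f2 s\<bar>" by (simp add: abs_mult)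
    moreover have "\<bar>(a-1) * ?e powr (a-2) * f1 s * f1 s + ?e powr (a-1) * f2 s\<bar> \<le>
       \<bar>(a-1) * ?e powr (a-2) * f1 s * f1 s\<bar> + \<bar>?e powr (a-1) * f2 s\<bar>" by (rule abs_triangle_ineq)
    ultimately show ?thesis using a unfolding Ph2_def
      by (simp add: abs_mult mult_left_mono mult.assoc)
  qed
  also have "\<dots> \<le> a * ((a-1) * ?e powr (a-2) * M1\<^sup>2 + ?e powr (a-2) * \<bar>M2\<bar>)"
    using a p M2[OF s] m1
    by (intro mult_left_mono add_mono mult_mono) auto
  also have "\<dots> \<le> (a * (a-1) * M1\<^sup>2 + a * \<bar>M2\<bar> + 1) * ?e powr (a-2)" by (simp add: algebra_simps)
  finally show ?thesis using False by (simp add: eta_star_def)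
qed




lemma sfun_deriv: "R > 0 \<Longrightarrow> (sfun R t has_real_derivative 2 * (\<rho> - 1) / R) (at \<rho>)"
  unfolding sfun_def by (auto intro!: derivative_eq_intros simp: power2_eq_square field_simps)

lemma sfun_pos: "R > 0 \<Longrightarrow> t \<ge> 0 \<Longrightarrow> \<rho> > 1 \<Longrightarrow> sfun R t \<rho> > 0"
  unfolding sfun_def by (simp add: add_pos_nonneg)

lemma G_deriv: assumes "a > 2" "R > 0" "t \<ge> 0" "\<rho> > 1"
  shows "((\<lambda>\<rho>. eta (sfun R t \<rho>) powr a) has_real_derivative G1f eta f1 a R t \<rho>) (at \<rho>)"
  unfolding G1f_def
  by (rule DERIV_chain2[OF phi_deriv[OF assms(1) sfun_pos[OF assms(2-4)]] sfun_deriv[OF assms(2)]])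

lemma G1_deriv: assumes "a > 2" "R > 0" "t \<ge> 0" "\<rho> > 1"
  shows "((\<lambda>\<rho>. G1f eta f1 a R t \<rho>) has_real_derivative G2f eta f1 f2 a R t \<rho>) (at \<rho>)"
proof -
  note D = DERIV_mult[OF DERIV_chain2[OF phi1_deriv[OF assms(1) sfun_pos[OF assms(2-4)]] sfun_deriv[OF assms(2)]],
     of "\<lambda>\<rho>. 2 * (\<rho> - 1) / R" "2 / R"]
  have D2: "((\<lambda>\<rho>. 2 * (\<rho> - 1) / R) has_real_derivative 2 / R) (at \<rho>)"
    using assms by (auto intro!: derivative_eq_intros)
  show ?thesis unfolding G1f_def G2f_def
    by (rule DERIV_cong[OF D[OF D2]]) (use assms in \<open>simp add: power2_eq_square field_simps\<close>)
qed



lemma partial_F: assumes a: "a > 2" and R: "R > 0" and t: "t \<ge> 0" and y: "norm y > 1"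
  shows "partial_x i (\<lambda>y. eta (sfun R t (norm y)) powr a) y = G1f eta f1 a R t (norm y) * (y$i / norm y)"
proof -
  have y0: "y \<noteq> 0" using y by auto
  have G: "((\<lambda>\<rho>. eta (sfun R t \<rho>) powr a) has_real_derivative G1f eta f1 a R t (norm (y + 0 *\<^sub>R axis i 1)))
     (at (norm (y + 0 *\<^sub>R axis i 1)))"
    using G_deriv[OF a R t, of "norm (y + 0 *\<^sub>R axis i 1)"] y by simp
  have "((\<lambda>h. eta (sfun R t (norm (y + h *\<^sub>R axis i 1))) powr a) has_real_derivative
      G1f eta f1 a R t (norm y) * (y$i / norm y)) (at 0)"
    using DERIV_chain2[OF G normline[OF y0]] by simp
  then show ?thesis unfolding partial_x_def by (rule DERIV_imp_deriv)
qed

lemma grad_F: assumes a: "a > 2" and R: "R > 0" and t: "t \<ge> 0" and x: "norm x > 1"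
  shows "norm (grad (\<lambda>y. eta (sfun R t (norm y)) powr a) x) = \<bar>G1f eta f1 a R t (norm x)\<bar>"
proof -
  have "grad (\<lambda>y. eta (sfun R t (norm y)) powr a) x = (G1f eta f1 a R t (norm x) / norm x) *\<^sub>R x"
    unfolding grad_def using partial_F[OF a R t x] by (simp add: vec_eq_iff)
  moreover have "x \<noteq> 0" using x by (cases "x = 0") auto
  ultimately show ?thesis using x by simp
qed

lemma lap_F: assumes a: "a > 2" and R: "R > 0" and t: "t \<ge> 0" and x: "norm x > 1"
  shows "laplacian (\<lambda>y. eta (sfun R t (norm y)) powr a) x
     = G2f eta f1 f2 a R t (norm x) + G1f eta f1 a R t (norm x) / norm x"
proof -
  let ?F = "\<lambda>y. eta (sfun R t (norm y)) powr a"
  let ?r = "norm x"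
  have x0: "x \<noteq> 0" using x by (cases "x = 0") auto
  have r0: "?r > 0" using x by linarith
  have each: "partial_x i (partial_x i ?F) x
      = G2f eta f1 f2 a R t ?r * (x$i / ?r) * (x$i / ?r) + G1f eta f1 a R t ?r * ((?r - x$i * (x$i / ?r)) / (?r * ?r))" for i
  proof -
    let ?S = "{h::real. norm (x + h *\<^sub>R axis i 1) > 1}"
    have So: "open ?S"
      by (intro open_Collect_less continuous_intros)
    have S0: "0 \<in> ?S" using x by simp
    have eqS: "G1f eta f1 a R t (norm (x + h *\<^sub>R axis i 1)) * ((x$i + h) / norm (x + h *\<^sub>R axis i 1))
        = partial_x i ?F (x + h *\<^sub>R axis i 1)" if "h \<in> ?S" for h
      using partial_F[OF a R t, of "x + h *\<^sub>R axis i 1" i] that by simp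
    have G: "(G1f eta f1 a R t has_real_derivative G2f eta f1 f2 a R t (norm (x + 0 *\<^sub>R axis i 1)))
       (at (norm (x + 0 *\<^sub>R axis i 1)))"
      using G1_deriv[OF a R t, of "norm (x + 0 *\<^sub>R axis i 1)"] x by simp
    note D1 = DERIV_chain2[OF G normline[OF x0, of i]]
    have D2: "((\<lambda>h. (x$i + h) / norm (x + h *\<^sub>R axis i 1)) has_real_derivative
        (1 * norm (x + 0 *\<^sub>R axis i 1) - (x$i + 0) * (x$i / ?r)) / (norm (x + 0 *\<^sub>R axis i 1) * norm (x + 0 *\<^sub>R axis i 1))) (at 0)"
      by (rule DERIV_divide) (use normline[OF x0, of i] x in \<open>auto intro!: derivative_eq_intros\<close>)
    note D = DERIV_mult[OF D1 D2]
    have D': "((\<lambda>h. G1f eta f1 a R t (norm (x + h *\<^sub>R axis i 1)) * ((x$i + h) / norm (x + h *\<^sub>R axis i 1)))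
       has_real_derivative G2f eta f1 f2 a R t ?r * (x$i / ?r) * (x$i / ?r) + G1f eta f1 a R t ?r * ((?r - x$i * (x$i / ?r)) / (?r * ?r))) (at 0)"
      by (rule DERIV_cong[OF D]) simp
    have "((\<lambda>h. partial_x i ?F (x + h *\<^sub>R axis i 1)) has_real_derivative
       G2f eta f1 f2 a R t ?r * (x$i / ?r) * (x$i / ?r) + G1f eta f1 a R t ?r * ((?r - x$i * (x$i / ?r)) / (?r * ?r))) (at 0)"
      by (rule has_field_derivative_transform_within_open[OF D' So S0 eqS])
    then show ?thesis unfolding partial_x_def[of i "partial_x i ?F"] by (rule DERIV_imp_deriv)
  qed
  have sq: "(\<Sum>i\<in>UNIV. x$i * x$i) = ?r * ?r"
    using dot_square_norm[of x] by (simp add: inner_vec_def power2_eq_square)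
  have "laplacian ?F x = (\<Sum>i\<in>UNIV. G2f eta f1 f2 a R t ?r / (?r * ?r) * (x$i * x$i)
      + (G1f eta f1 a R t ?r / ?r - G1f eta f1 a R t ?r / (?r*?r*?r) * (x$i * x$i)))"
    unfolding laplacian_def each using r0 by (intro sum.cong refl) (simp add: field_simps)
  also have "\<dots> = G2f eta f1 f2 a R t ?r / (?r * ?r) * (\<Sum>i\<in>UNIV. x$i * x$i)
      + 2 * (G1f eta f1 a R t ?r / ?r) - G1f eta f1 a R t ?r / (?r*?r*?r) * (\<Sum>i\<in>UNIV. x$i * x$i)"
    by (simp add: sum.distrib sum_subtractf sum_distrib_left)
  also have "\<dots> = G2f eta f1 f2 a R t ?r + G1f eta f1 a R t ?r / ?r"
    unfolding sq using r0 by (simp add: field_simps)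
  finally show ?thesis .
qed

lemma t_deriv: assumes a: "a > 2" and R: "R > 0" and q: "q + t > 0"
  shows "((\<lambda>s. eta ((q + s) / R) powr a) has_real_derivative Ph1 eta f1 a ((q + t) / R) * (1 / R)) (at t)"
proof -
  have L: "((\<lambda>s. (q + s) / R) has_real_derivative 1 / R) (at t)"
    using R by (auto intro!: derivative_eq_intros)
  have s0: "(q+t)/R > 0" using q R by simp
  show ?thesis using DERIV_chain2[OF phi_deriv[OF a s0] L] by simp
qed

lemma t_derivs: assumes a: "a > 2" and R: "R > 0" and q: "q + t > 0"
  shows "deriv (\<lambda>s. eta ((q + s) / R) powr a) t = Ph1 eta f1 a ((q + t) / R) / R"
    "deriv (deriv (\<lambda>s. eta ((q + s) / R) powr a)) t = Ph2 eta f1 f2 a ((q + t) / R) / R\<^sup>2"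
proof -
  show "deriv (\<lambda>s. eta ((q + s) / R) powr a) t = Ph1 eta f1 a ((q + t) / R) / R"
    using DERIV_imp_deriv[OF t_deriv[OF a R q]] by simp
  let ?S = "{s. q + s > 0}"
  have So: "open ?S" by (intro open_Collect_less continuous_intros)
  have eqS: "Ph1 eta f1 a ((q + s) / R) * (1 / R) = deriv (\<lambda>s. eta ((q + s) / R) powr a) s" if "s \<in> ?S" for s
    using DERIV_imp_deriv[OF t_deriv[OF a R, of q s]] that by simp
  have L: "((\<lambda>s. (q + s) / R) has_real_derivative 1 / R) (at t)"
    using R by (auto intro!: derivative_eq_intros)
  have s0: "(q+t)/R > 0" using q R by simp
  have "((\<lambda>s. Ph1 eta f1 a ((q + s) / R)) has_real_derivative Ph2 eta f1 f2 a ((q + t) / R) * (1 / R)) (at t)"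
    using DERIV_chain2[OF phi1_deriv[OF a s0] L] by simp
  then
  have D: "((\<lambda>s. Ph1 eta f1 a ((q + s) / R) * (1 / R)) has_real_derivative Ph2 eta f1 f2 a ((q + t) / R) * (1 / R) * (1 / R)) (at t)"
    using q R by (intro DERIV_cmult_right) simp
  have "(deriv (\<lambda>s. eta ((q + s) / R) powr a) has_real_derivative Ph2 eta f1 f2 a ((q + t) / R) * (1 / R) * (1 / R)) (at t)"
    by (rule has_field_derivative_transform_within_open[OF D So _ eqS]) (use q in simp)
  then show "deriv (deriv (\<lambda>s. eta ((q + s) / R) powr a)) t = Ph2 eta f1 f2 a ((q + t) / R) / R\<^sup>2"
    using DERIV_imp_deriv by (simp add: power2_eq_square)
qed


lemma r_ln: fixes r :: real assumes "r > 1" shows "r - 1 \<le> r * ln r"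
proof -
  have "ln (inverse r) \<le> inverse r - 1" using assms by (intro ln_le_minus_one) simp
  then have "- ln r \<le> inverse r - 1" using assms by (simp add: ln_inverse)
  then have "r * (- ln r) \<le> r * (inverse r - 1)" using assms by (intro mult_left_mono) auto
  then show ?thesis using assms by (simp add: algebra_simps)
qed

lemma main_bounds:
  assumes a: "a > 2" and R: "R > 0" and x: "norm x > 1" and t: "t \<ge> 0"
    and P: "(norm x - 1)\<^sup>2 + t \<le> R"
  defines "E \<equiv> eta_star eta (((norm x - 1)\<^sup>2 + t) / R) powr (a - 2)"
  shows "\<bar>deriv (\<lambda>s. eta (((norm x - 1)\<^sup>2 + s) / R) powr a) t\<bar> \<le> (a * \<bar>M1\<bar> + 1) / R * E"
    "\<bar>deriv (deriv (\<lambda>s. eta (((norm x - 1)\<^sup>2 + s) / R) powr a)) t\<bar>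
       \<le> (a * (a-1) * M1\<^sup>2 + a * \<bar>M2\<bar> + 1) / R\<^sup>2 * E"
    "norm (grad (\<lambda>y. eta (sfun R t (norm y)) powr a) x) \<le> (2 * (a * \<bar>M1\<bar> + 1)) / R * norm x * ln (norm x) * E"
    "\<bar>laplacian (\<lambda>y. eta (sfun R t (norm y)) powr a) x\<bar>
       \<le> (4 * (a * (a-1) * M1\<^sup>2 + a * \<bar>M2\<bar> + 1) + 4 * (a * \<bar>M1\<bar> + 1)) / R * E"
proof -
  let ?r = "norm x"
  let ?s = "((?r - 1)\<^sup>2 + t) / R"
  let ?K1 = "a * \<bar>M1\<bar> + 1" and ?K2 = "a * (a-1) * M1\<^sup>2 + a * \<bar>M2\<bar> + 1"
  have q: "(?r - 1)\<^sup>2 + t > 0" using x t by (simp add: add_pos_nonneg)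
  have s0: "?s > 0" using q R by simp
  have s1: "?s \<le> 1" using P R by simp
  have sf: "sfun R t ?r = ?s" by (simp add: sfun_def)
  have E0: "E \<ge> 0" unfolding E_def by simp
  have B1: "\<bar>Ph1 eta f1 a ?s\<bar> \<le> ?K1 * E" unfolding E_def by (rule ph1_bound[OF a s0 s1])
  have B2: "\<bar>Ph2 eta f1 f2 a ?s\<bar> \<le> ?K2 * E" unfolding E_def by (rule ph2_bound[OF a s0 s1])
  note TD = t_derivs[OF a R q]
  show "\<bar>deriv (\<lambda>s. eta (((norm x - 1)\<^sup>2 + s) / R) powr a) t\<bar> \<le> ?K1 / R * E"
    unfolding TD(1) using B1 R by (simp add: field_simps)
  show "\<bar>deriv (deriv (\<lambda>s. eta (((norm x - 1)\<^sup>2 + s) / R) powr a)) t\<bar> \<le> ?K2 / R\<^sup>2 * E"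
    unfolding TD(2) using B2 R by (simp add: field_simps)
  have r1: "?r - 1 > 0" using x by simp
  have rl: "?r - 1 \<le> ?r * ln ?r" using r_ln x by simp
  have g1: "\<bar>G1f eta f1 a R t ?r\<bar> = \<bar>Ph1 eta f1 a ?s\<bar> * (2 * (?r - 1) / R)"
    unfolding G1f_def sf using r1 R by (simp add: abs_mult)
  show "norm (grad (\<lambda>y. eta (sfun R t (norm y)) powr a) x) \<le> (2 * ?K1) / R * ?r * ln ?r * E"
  proof -
    have "norm (grad (\<lambda>y. eta (sfun R t (norm y)) powr a) x) = \<bar>Ph1 eta f1 a ?s\<bar> * (2 * (?r - 1) / R)"
      using grad_F[OF a R t x] g1 by simp
    also have "\<dots> \<le> (?K1 * E) * (2 * (?r * ln ?r) / R)"
      using B1 rl R r1 E0 a by (intro mult_mono divide_right_mono) auto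
    finally show ?thesis by (simp add: field_simps)
  qed
  have sq: "(?r - 1)\<^sup>2 \<le> R" using P t by simp
  have c1: "(2 * (?r - 1) / R)\<^sup>2 \<le> 4 / R"
  proof -
    have "(2 * (?r - 1) / R)\<^sup>2 = 4 * (?r - 1)\<^sup>2 / R / R" using R by (simp add: power2_eq_square field_simps)
    also have "\<dots> \<le> 4 * R / R / R" using sq R by (intro divide_right_mono) auto
    finally show ?thesis using R by simp
  qed
  have c2: "(?r - 1) / ?r \<le> 1" using r1 by (simp add: divide_le_eq)
  show "\<bar>laplacian (\<lambda>y. eta (sfun R t (norm y)) powr a) x\<bar> \<le> (4 * ?K2 + 4 * ?K1) / R * E"
  proof -
    have "\<bar>laplacian (\<lambda>y. eta (sfun R t (norm y)) powr a) x\<bar>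
        \<le> \<bar>Ph2 eta f1 f2 a ?s\<bar> * (2 * (?r - 1) / R)\<^sup>2 + \<bar>Ph1 eta f1 a ?s\<bar> * (2 / R)
           + \<bar>Ph1 eta f1 a ?s\<bar> * (2 / R) * ((?r - 1) / ?r)"
    proof -
      let ?A = "Ph2 eta f1 f2 a ?s * (2 * (?r - 1) / R)\<^sup>2"
      let ?B = "Ph1 eta f1 a ?s * (2 / R)"
      let ?C = "Ph1 eta f1 a ?s * (2 * (?r - 1) / R) / ?r"
      have L: "laplacian (\<lambda>y. eta (sfun R t (norm y)) powr a) x = ?A + ?B + ?C"
        unfolding lap_F[OF a R t x] G2f_def G1f_def sf by simp
      have "\<bar>?A + ?B + ?C\<bar> \<le> \<bar>?A\<bar> + \<bar>?B\<bar> + \<bar>?C\<bar>" using abs_triangle_ineq[of "?A + ?B" ?C] abs_triangle_ineq[of ?A ?B] by linarith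
      moreover have "\<bar>?A\<bar> = \<bar>Ph2 eta f1 f2 a ?s\<bar> * (2 * (?r - 1) / R)\<^sup>2" by (simp add: abs_mult)
      moreover have "\<bar>?B\<bar> = \<bar>Ph1 eta f1 a ?s\<bar> * (2 / R)" using R by (simp add: abs_mult)
      moreover have "\<bar>?C\<bar> = \<bar>Ph1 eta f1 a ?s\<bar> * (2 / R) * ((?r - 1) / ?r)"
        using R r1 by (simp add: abs_mult abs_divide)
      ultimately show ?thesis unfolding L by simp
    qed
    also have "\<dots> \<le> (?K2 * E) * (4 / R) + (?K1 * E) * (2 / R) + (?K1 * E) * (2 / R) * 1"
      using B1 B2 c1 c2 R r1 E0
      by (intro add_mono mult_mono) auto
    also have "\<dots> = (4 * ?K2 + 4 * ?K1) / R * E" using R by (simp add: field_simps)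
    finally show ?thesis .
  qed
qed

end

theorem lemma2p2:
  fixes p :: real and eta :: "real \<Rightarrow> real"
  assumes "p > 1" and "cutoff eta"
  shows "\<exists>C1 C2 C3 C4 :: real. C1 > 0 \<and> C2 > 0 \<and> C3 > 0 \<and> C4 > 0 \<and>
    (\<forall>R > 0.
      (\<forall>x t. (x, t) \<in> PR (R / 2) \<longrightarrow> psiR p eta R x t = 1) \<and>
      (\<forall>x t. x \<in> Omega \<and> t \<ge> 0 \<and> (x, t) \<notin> PR R \<longrightarrow> psiR p eta R x t = 0) \<and>
      (\<forall>(x, t) \<in> PR R.
         \<bar>deriv (\<lambda>s. psiR p eta R x s) t\<bar>
           \<le> C1 / R * (psiR_star p eta R x t) powr (1 / p) \<and>
         \<bar>deriv (deriv (\<lambda>s. psiR p eta R x s)) t\<bar>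
           \<le> C2 / R\<^sup>2 * (psiR_star p eta R x t) powr (1 / p) \<and>
         norm (grad (\<lambda>y. psiR p eta R y t) x)
           \<le> C3 / R * norm x * ln (norm x) * (psiR_star p eta R x t) powr (1 / p) \<and>
         \<bar>laplacian (\<lambda>y. psiR p eta R y t) x\<bar>
           \<le> C4 / R * (psiR_star p eta R x t) powr (1 / p)))"
proof -
  from assms(2) obtain f1 f2 where
    D: "\<forall>s\<ge>0. (eta has_real_derivative f1 s) (at s within {0..}) \<and>
              (f1 has_real_derivative f2 s) (at s within {0..})"
    and c2: "continuous_on {0..} f2"
    and fl: "\<And>s. 0 \<le> s \<Longrightarrow> s \<le> 1/2 \<Longrightarrow> eta s = 1"
    and mono: "\<And>a b. 1/2 < a \<Longrightarrow> a < b \<Longrightarrow> b < 1 \<Longrightarrow> eta b \<le> eta a"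
    and z: "\<And>s. s \<ge> 1 \<Longrightarrow> eta s = 0"
    unfolding cutoff_def C2_on_nonneg_def by blast
  have d1: "(eta has_real_derivative f1 s) (at s)" if "s > 0" for s
    using D[rule_format, of s] that at_within_interior[of s "{0..}"] by auto
  have d2: "(f1 has_real_derivative f2 s) (at s)" if "s > 0" for s
    using D[rule_format, of s] that at_within_interior[of s "{0..}"] by auto
  have ct: "isCont eta s" if "s > 0" for s using DERIV_isCont[OF d1[OF that]] .
  have nonneg: "0 \<le> eta s" if "s > 0" for s
  proof -
    consider "s \<le> 1/2" | "s \<ge> 1" | "1/2 < s" "s < 1" by linarith
    then show ?thesis
    proof cases
      case 3
      have "(eta \<longlongrightarrow> eta 1) (at_left 1)"
        using ct[of 1] by (simp add: isCont_def filterlim_at_split)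
      moreover have "\<forall>\<^sub>F b in at_left 1. eta b \<le> eta s"
        unfolding eventually_at_left_field using 3
        by (intro exI[of _ s]) (auto intro: mono)
      ultimately have "eta 1 \<le> eta s"
        by (intro tendsto_upperbound) (auto simp: trivial_limit_at_left_real)
      then show ?thesis using z[of 1] by simp
    qed (use fl z that in auto)
  qed
  have le1: "eta s \<le> 1" if "s > 0" for s
  proof -
    consider "s \<le> 1/2" | "s \<ge> 1" | "1/2 < s" "s < 1" by linarith
    then show ?thesis
    proof cases
      case 3
      have "(eta \<longlongrightarrow> eta (1/2)) (at_right (1/2))"
        using ct[of "1/2"] by (simp add: isCont_def filterlim_at_split)
      moreover have "\<forall>\<^sub>F b in at_right (1/2). eta s \<le> eta b"
        unfolding eventually_at_right_field using 3
        by (intro exI[of _ s]) (auto intro: mono)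
      ultimately have "eta s \<le> eta (1/2)"
        by (intro tendsto_lowerbound) (auto simp: trivial_limit_at_right_real)
      then show ?thesis using fl[of "1/2"] by simp
    qed (use fl z that in auto)
  qed
  have flat: "eta s = 1" if "0 < s" "s \<le> 1/2" for s using fl that by simp
  have c1: "continuous_on {0..1} f1"
  proof -
    have cw: "continuous (at s within {0..}) f1" if "s \<in> {0..1}" for s
      using D[rule_format, of s] that by (auto intro: DERIV_continuous)
    have "continuous (at s within {0..1}) f1" if "s \<in> {0..1}" for s
      by (rule continuous_within_subset[OF cw[OF that]]) auto
    then show ?thesis
      unfolding continuous_on_eq_continuous_within by blast
  qed
  obtain M1 where M1: "\<forall>v\<in>f1 ` {0..1}. norm v \<le> M1"
    using compact_imp_bounded[OF compact_continuous_image[OF c1 compact_Icc]]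
    unfolding bounded_iff by auto
  obtain M2 where M2: "\<forall>v\<in>f2 ` {0..1}. norm v \<le> M2"
    using compact_imp_bounded[OF compact_continuous_image[OF continuous_on_subset[OF c2, of "{0..1}"] compact_Icc]]
    unfolding bounded_iff by auto
  have M1': "\<bar>f1 s\<bar> \<le> M1" if "0 < s" "s \<le> 1" for s
  proof -
    have "f1 s \<in> f1 ` {0..1}" using that by simp
    then show ?thesis using M1 by (metis real_norm_def)
  qed
  have M2': "\<bar>f2 s\<bar> \<le> M2" if "0 < s" "s \<le> 1" for s
  proof -
    have "f2 s \<in> f2 ` {0..1}" using that by simp
    then show ?thesis using M2 by (metis real_norm_def)
  qed
  define a where "a = 2 * pprime p"
  have a2: "a > 2" using assms(1) by (simp add: a_def pprime_def field_simps)
  have ap: "a / p = a - 2" using assms(1) by (simp add: a_def pprime_def field_simps)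
  define K1 where "K1 = a * \<bar>M1\<bar> + 1"
  define K2 where "K2 = a * (a-1) * M1\<^sup>2 + a * \<bar>M2\<bar> + 1"
  have K1: "K1 > 0" using a2 unfolding K1_def by (simp add: add_nonneg_pos)
  have K2: "K2 > 0" using a2 unfolding K2_def by (intro add_nonneg_pos) auto
  have H: "\<bar>deriv (\<lambda>s. psiR p eta R x s) t\<bar>
           \<le> K1 / R * (psiR_star p eta R x t) powr (1 / p) \<and>
         \<bar>deriv (deriv (\<lambda>s. psiR p eta R x s)) t\<bar>
           \<le> K2 / R\<^sup>2 * (psiR_star p eta R x t) powr (1 / p) \<and>
         norm (grad (\<lambda>y. psiR p eta R y t) x)
           \<le> (2 * K1) / R * norm x * ln (norm x) * (psiR_star p eta R x t) powr (1 / p) \<and>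
         \<bar>laplacian (\<lambda>y. psiR p eta R y t) x\<bar>
           \<le> (4 * K2 + 4 * K1) / R * (psiR_star p eta R x t) powr (1 / p)"
    if R: "R > 0" and x: "norm x > 1" and t: "t \<ge> 0" and P: "(norm x - 1)\<^sup>2 + t \<le> R" for R x t
  proof -
    have e1: "psiR p eta R x = (\<lambda>s. eta (((norm x - 1)\<^sup>2 + s) / R) powr a)"
      by (simp add: psiR_def sR_def a_def fun_eq_iff)
    have e2: "(\<lambda>y. psiR p eta R y t) = (\<lambda>y. eta (sfun R t (norm y)) powr a)"
      by (simp add: psiR_def sR_def sfun_def a_def)
    have e3: "psiR_star p eta R x t powr (1 / p) = eta_star eta (((norm x - 1)\<^sup>2 + t) / R) powr (a - 2)"
    proof -
      have "psiR_star p eta R x t = eta_star eta (((norm x - 1)\<^sup>2 + t) / R) powr a"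
        by (simp add: psiR_star_def sR_def a_def)
      then show ?thesis by (simp add: powr_powr ap)
    qed
    show ?thesis
    proof -
      note mb = main_bounds[of eta f1 f2 M1 M2 a R x t]
      have P1: "\<And>s. 0 < s \<Longrightarrow> (eta has_real_derivative f1 s) (at s)" using d1 by blast
      have P2: "\<And>s. 0 < s \<Longrightarrow> (f1 has_real_derivative f2 s) (at s)" using d2 by blast
      have P3: "\<And>s. 0 < s \<Longrightarrow> 0 \<le> eta s" using nonneg by blast
      have P4: "\<And>s. 0 < s \<Longrightarrow> eta s \<le> 1" using le1 by blast
      have P5: "\<And>s. 0 < s \<Longrightarrow> s \<le> 1/2 \<Longrightarrow> eta s = 1" using flat by blast
      have P6: "\<And>s. 0 < s \<Longrightarrow> s \<le> 1 \<Longrightarrow> \<bar>f1 s\<bar> \<le> M1" using M1' by blast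
      have P7: "\<And>s. 0 < s \<Longrightarrow> s \<le> 1 \<Longrightarrow> \<bar>f2 s\<bar> \<le> M2" using M2' by blast
      note mb' = mb[OF P1 P2 P3 P4 P5 P6 P7 a2 R x t P]
      show ?thesis unfolding e1 e2 e3 K1_def K2_def using mb' by simp
    qed
  qed
  have I: "psiR p eta R x t = 1" if "R > 0" "(x, t) \<in> PR (R / 2)" for R x t
  proof -
    have "0 \<le> sR R x t" "sR R x t \<le> 1/2" using that by (auto simp: PR_def sR_def field_simps)
    then show ?thesis by (simp add: psiR_def fl)
  qed
  have II: "psiR p eta R x t = 0" if "R > 0" "x \<in> Omega" "t \<ge> 0" "(x, t) \<notin> PR R" for R x t
  proof -
    have "sR R x t \<ge> 1" using that by (auto simp: PR_def sR_def field_simps)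
    then show ?thesis by (simp add: psiR_def z)
  qed
  show ?thesis
    apply (rule exI[of _ K1], rule exI[of _ K2], rule exI[of _ "2 * K1"], rule exI[of _ "4 * K2 + 4 * K1"])
    using K1 K2 I II H by (auto simp: PR_def Omega_def)
qed

end
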